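(* Consider the following MIMO flat-fading model. Fix integers $l_{\mathrm t},l_{\mathrm r},n\ge1$ and a known pilot matrix $S=[s_{t,k}]\in\mathbb{C}^{n\times l_{\mathrm t}}$. Let $\vec{\mathbf h}\sim\mathcal{CN}(\vec\mu_{\vec{\mathbf h}},\Sigma_{\vec{\mathbf h}})$ with $\Sigma_{\vec{\mathbf h}}$ positive definite, $\mathbf f_\delta\sim\mathcal N(\mu_{\mathbf f_\delta},\sigma^2_{\mathbf f_\delta})$ real, noise entries i.i.d. $\mathcal{CN}(0,1)$, all mutually independent, and $\vec{\mathbf y}=\grave X(\mathbf f_\delta)\vec{\mathbf h}+\vec{\mathbf n}$. Then the joint MAP estimation problem of channel and frequency offset, $\max_{(\vec h,f_\delta)\in\mathbb{C}^{l_{\mathrm r}l_{\mathrm t}}\times\mathbb R} f_{\vec{\mathbf h},\mathbf f_\delta,\vec{\mathbf y}}(\vec h,f_\delta,\vec y)$, decomposes into two separable problems: for every $\vec y$, a pair $(\hat{\vec h},\hat f_\delta)$ is a joint maximizer if and only if (1) $\hat f_\delta\in\arg\max_{f_\delta} f_{\vec{\mathbf y}|\mathbf f_\delta}(\vec y|f_\delta)f_{\mathbf f_\delta}(f_\delta)=\arg\max_{f_\delta}g(\vec y,f_\delta)$ (the individual MAP estimate of the frequency offset; it reduces to the ML estimate $\arg\max_{f_\delta}f_{\vec{\mathbf y}|\mathbf f_\delta}(\vec y|f_\delta)$ when $f_{\mathbf f_\delta}$ is taken constant, equivalently $\sigma^{-2}_{\mathbf f_\delta}=0$ in $g$), and (2)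 $\hat{\vec h}=\arg\max_{\vec h} f_{\vec{\mathbf h}|\vec{\mathbf y},\mathbf f_\delta}(\vec h|\vec y,\hat f_\delta)=\hat{\vec h}_{\mathrm{MMSE}}(\vec y,\hat f_\delta)$, where $\hat{\vec h}_{\mathrm{MMSE}}(\vec y,f_\delta)=A\grave X(f_\delta)^\dagger\big(\vec y-\grave X(f_\delta)\vec\mu_{\vec{\mathbf h}}\big)+\vec\mu_{\vec{\mathbf h}}$. Here $g(\vec y,f_\delta)=2\,\mathrm{Re}[\langle\grave X(f_\delta)^\dagger\vec y,\vec b\rangle]+(\grave X(f_\delta)^\dagger\vec y)^\dagger A(\grave X(f_\delta)^\dagger\vec y)-\frac12\sigma_{\mathbf f_\delta}^{-2}|f_\delta-\mu_{\mathbf f_\delta}|^2$.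
   Context: $y_{r,k}=e^{j2\pi \mathbf f_\delta(k-1)}\sum_{t=1}^{l_{\mathrm t}}s_{t,k}h_{r,t}+n_{r,k}$, $r=1..l_{\mathrm r}$, $k=1..n$. $\vec{\mathbf h}$ stacks $h_{r,t}$ in position $(r-1)l_{\mathrm t}+t$; $\vec{\mathbf y},\vec{\mathbf n}$ stack index $(r,k)$ in position $(r-1)n+k$. $F(f)=\mathrm{diag}(e^{j2\pi f(k-1)})_{k=1..n}$, $X(f)=F(f)S$, $\grave X(f)=I_{l_{\mathrm r}}\otimes X(f)$, $\grave S=I_{l_{\mathrm r}}\otimes S$. $A=(\grave S^\dagger\grave S+\Sigma_{\vec{\mathbf h}}^{-1})^{-1}$, $\vec b=(I-A\grave S^\dagger\grave S)\vec\mu_{\vec{\mathbf h}}$. $f_{\vec{\mathbf h},\mathbf f_\delta,\vec{\mathbf y}}$ is the joint density, $f_{\vec{\mathbf h}|\vec{\mathbf y},\mathbf f_\delta}$, $f_{\vec{\mathbf y}|\mathbf f_\delta}$ conditional densities, $f_{\mathbf f_\delta}$ the prior density. $\langle u,v\rangle=v^\dagger u$. *)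

theory Defs
  imports "HOL-Analysis.Analysis"
begin

text \<open>Index conventions: receive antennas are indexed by a finite type 'r, transmit antennas
by a finite type 't, time instants by a finite well-ordered type 'k (so that the k-th instant,
counted from 0, is pos k, playing the role of k-1 in the paper).  The stacked channel vector
lives in complex^('r \<times> 't) and the stacked observation in complex^('r \<times> 'k); entry (r,t)
resp. (r,k) corresponds to position (r-1) lt + t resp. (r-1) n + k of the paper.\<close>

definition pos :: "'k::{finite,wellorder} \<Rightarrow> nat" where
  "pos k = card {k'. k' < k}"

definition cadj :: "complex^'n^'m \<Rightarrow> complex^'m^'n" where
  "cadj M = (\<chi> i j. cnj (M $ j $ i))"

definition cinner :: "complex^'n \<Rightarrow> complex^'n \<Rightarrow> complex" where
  "cinner u v = (\<Sum>i\<in>UNIV. u $ i * cnj (v $ i))"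

definition pos_def_mat :: "complex^'n^'n \<Rightarrow> bool" where
  "pos_def_mat M \<longleftrightarrow> cadj M = M \<and> (\<forall>x. x \<noteq> 0 \<longrightarrow> 0 < Re (cinner (M *v x) x))"

text \<open>\<open>X\<grave>(f) = I_{lr} \<otimes> (F(f) S)\<close>, with pilot matrix S (rows = time instants, columns =
transmit antennas).  \<open>S\<grave> = X\<grave>(0)\<close>.\<close>
definition Xgrave :: "complex^'t::finite^'k::{finite,wellorder} \<Rightarrow> real \<Rightarrow> complex^('r::finite \<times> 't)^('r \<times> 'k)" where
  "Xgrave S f = (\<chi> i j. if fst i = fst j then
        cis (2 * pi * f * real (pos (snd i))) * S $ snd i $ snd j else 0)"

definition Sgrave :: "complex^'t::finite^'k::{finite,wellorder} \<Rightarrow> complex^('r::finite \<times> 't)^('r \<times> 'k)" where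
  "Sgrave S = (\<chi> i j. if fst i = fst j then S $ snd i $ snd j else 0)"

definition Amat :: "complex^'t::finite^'k::{finite,wellorder} \<Rightarrow> complex^('r::finite\<times>'t)^('r\<times>'t)
      \<Rightarrow> complex^('r\<times>'t)^('r\<times>'t)" where
  "Amat S Sig = matrix_inv (cadj (Sgrave S) ** Sgrave S + matrix_inv Sig)"

definition bvec :: "complex^'t::finite^'k::{finite,wellorder} \<Rightarrow> complex^('r::finite\<times>'t)^('r\<times>'t)
      \<Rightarrow> complex^('r::finite\<times>'t) \<Rightarrow> complex^('r\<times>'t)" where
  "bvec S Sig mu = (mat 1 - Amat S Sig ** (cadj (Sgrave S) ** Sgrave S)) *v mu"

definition cgauss_density :: "complex^'n \<Rightarrow> complex^'n^'n \<Rightarrow> complex^'n \<Rightarrow> real" where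
  "cgauss_density mu Sig x =
     exp (- Re (cinner (matrix_inv Sig *v (x - mu)) (x - mu))) / (pi ^ CARD('n) * cmod (det Sig))"

definition noise_density :: "complex^'n \<Rightarrow> real" where
  "noise_density v = exp (- (norm v)\<^sup>2) / pi ^ CARD('n)"

definition rgauss_density :: "real \<Rightarrow> real \<Rightarrow> real \<Rightarrow> real" where
  "rgauss_density m s2 x = exp (- (x - m)\<^sup>2 / (2 * s2)) / sqrt (2 * pi * s2)"

definition joint_density ::
  "complex^'t::finite^'k::{finite,wellorder} \<Rightarrow> complex^('r::finite\<times>'t) \<Rightarrow> complex^('r\<times>'t)^('r\<times>'t) \<Rightarrow> real \<Rightarrow> real
    \<Rightarrow> complex^('r::finite\<times>'t) \<Rightarrow> real \<Rightarrow> complex^('r\<times>'k) \<Rightarrow> real" where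
  "joint_density S mu Sig muf s2 h f y =
     cgauss_density mu Sig h * rgauss_density muf s2 f * noise_density (y - Xgrave S f *v h)"

definition cond_y_given_f ::
  "complex^'t::finite^'k::{finite,wellorder} \<Rightarrow> complex^('r::finite\<times>'t) \<Rightarrow> complex^('r\<times>'t)^('r\<times>'t) \<Rightarrow> real \<Rightarrow> real
    \<Rightarrow> complex^('r\<times>'k) \<Rightarrow> real \<Rightarrow> real" where
  "cond_y_given_f S mu Sig muf s2 y f =
     (\<integral>h. joint_density S mu Sig muf s2 h f y \<partial>lborel) / rgauss_density muf s2 f"

definition cond_h_given_yf ::
  "complex^'t::finite^'k::{finite,wellorder} \<Rightarrow> complex^('r::finite\<times>'t) \<Rightarrow> complex^('r\<times>'t)^('r\<times>'t) \<Rightarrow> real \<Rightarrow> real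
    \<Rightarrow> complex^('r::finite\<times>'t) \<Rightarrow> complex^('r\<times>'k) \<Rightarrow> real \<Rightarrow> real" where
  "cond_h_given_yf S mu Sig muf s2 h y f =
     joint_density S mu Sig muf s2 h f y
       / (cond_y_given_f S mu Sig muf s2 y f * rgauss_density muf s2 f)"

definition h_mmse ::
  "complex^'t::finite^'k::{finite,wellorder} \<Rightarrow> complex^('r::finite\<times>'t) \<Rightarrow> complex^('r\<times>'t)^('r\<times>'t)
    \<Rightarrow> complex^('r\<times>'k) \<Rightarrow> real \<Rightarrow> complex^('r\<times>'t)" where
  "h_mmse S mu Sig y f =
     Amat S Sig *v (cadj (Xgrave S f) *v (y - Xgrave S f *v mu)) + mu"

text \<open>The objective g; the parameter isig2 stands for \<open>\<sigma>_{f\<delta>}^{-2}\<close> (isig2 = 0 gives the ML variant).\<close>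
definition gfun ::
  "complex^'t::finite^'k::{finite,wellorder} \<Rightarrow> complex^('r::finite\<times>'t) \<Rightarrow> complex^('r\<times>'t)^('r\<times>'t) \<Rightarrow> real \<Rightarrow> real
    \<Rightarrow> complex^('r\<times>'k) \<Rightarrow> real \<Rightarrow> real" where
  "gfun S mu Sig muf isig2 y f =
     (let z = cadj (Xgrave S f) *v y in
       2 * Re (cinner z (bvec S Sig mu)) + Re (cinner (Amat S Sig *v z) z)
       - 1/2 * isig2 * \<bar>f - muf\<bar>\<^sup>2)"

end

theory Submission
  imports Defs "HOL-Probability.Distributions"
begin


lemma cinner_add_left: "cinner (u + v) w = cinner u w + cinner v w"
  by (simp add: cinner_def algebra_simps sum.distrib)
lemma cinner_add_right: "cinner w (u + v) = cinner w u + cinner w v"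
  by (simp add: cinner_def algebra_simps sum.distrib)
lemma cinner_diff_left: "cinner (u - v) w = cinner u w - cinner v w"
  by (simp add: cinner_def algebra_simps sum_subtractf)
lemma cinner_diff_right: "cinner w (u - v) = cinner w u - cinner w v"
  by (simp add: cinner_def algebra_simps sum_subtractf)
lemma cinner_zero_left[simp]: "cinner 0 w = 0" by (simp add: cinner_def)
lemma cinner_zero_right[simp]: "cinner w 0 = 0" by (simp add: cinner_def)
lemma cinner_commute: "cinner v u = cnj (cinner u v)"
  by (simp add: cinner_def mult.commute)
lemma Re_cinner_commute: "Re (cinner v u) = Re (cinner u v)"
  by (subst cinner_commute) simp
lemma cinner_mv: "cinner (M *v u) v = cinner u (cadj M *v v)"
  unfolding cinner_def cadj_def matrix_vector_mult_def
  apply (simp add: sum_distrib_left sum_distrib_right)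
  apply (subst sum.swap)
  apply (simp add: mult_ac)
  done
lemma cinner_self: "cinner u u = complex_of_real ((norm u)\<^sup>2)"
proof -
  have "(norm u)\<^sup>2 = (\<Sum>i\<in>UNIV. (cmod (u $ i))\<^sup>2)"
    by (simp add: norm_vec_def L2_set_def sum_nonneg)
  moreover have "\<And>i. u$i * cnj(u$i) = of_real ((cmod (u$i))\<^sup>2)"
    by (simp only: complex_norm_square)
  ultimately show ?thesis unfolding cinner_def
    by (simp del: of_real_power)
qed
lemma cadj_cadj[simp]: "cadj (cadj M) = M"
  by (simp add: cadj_def vec_eq_iff)
lemma cadj_mult: "cadj (A ** B) = cadj B ** cadj A"
  by (simp add: cadj_def vec_eq_iff matrix_matrix_mult_def mult.commute)
lemma cadj_mat1[simp]: "cadj (mat 1) = mat 1"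
  by (simp add: cadj_def vec_eq_iff mat_def)
lemma cadj_add: "cadj (A + B) = cadj A + cadj B"
  by (simp add: cadj_def vec_eq_iff)

lemma inv_props:
  fixes M :: "complex^'n^'n"
  assumes "invertible M"
  shows "M ** matrix_inv M = mat 1" "matrix_inv M ** M = mat 1"
proof -
  have "\<exists>A'. M ** A' = mat 1 \<and> A' ** M = mat 1" using assms by (simp add: invertible_def)
  then have "M ** matrix_inv M = mat 1 \<and> matrix_inv M ** M = mat 1"
    unfolding matrix_inv_def by (rule someI_ex)
  then show "M ** matrix_inv M = mat 1" "matrix_inv M ** M = mat 1" by auto
qed

lemma inv_unique:
  fixes M :: "complex^'n^'n"
  assumes "invertible M" "B ** M = mat 1"
  shows "matrix_inv M = B"
  by (metis assms inv_props(1) matrix_mul_assoc matrix_mul_lid matrix_mul_rid)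

lemma cadj_inv:
  fixes M :: "complex^'n^'n"
  assumes "invertible M"
  shows "cadj (matrix_inv M) = matrix_inv (cadj M)" "invertible (cadj M)"
proof -
  have 1: "cadj (matrix_inv M) ** cadj M = mat 1"
    using inv_props(1)[OF assms] by (metis cadj_mult cadj_mat1)
  have 2: "cadj M ** cadj (matrix_inv M) = mat 1"
    using inv_props(2)[OF assms] by (metis cadj_mult cadj_mat1)
  show i: "invertible (cadj M)" using 1 2 invertible_def by blast
  show "cadj (matrix_inv M) = matrix_inv (cadj M)"
    using inv_unique[OF i 1] by simp
qed

definition pdm :: "complex^'n^'n \<Rightarrow> bool" where
  "pdm M \<longleftrightarrow> (\<forall>x. x \<noteq> 0 \<longrightarrow> 0 < Re (cinner (M *v x) x))"

lemma pdm_invertible: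
  fixes M :: "complex^'n^'n"
  assumes "pdm M" shows "invertible M"
proof -
  have "\<forall>x. M *v x = 0 \<longrightarrow> x = 0"
    using assms unfolding pdm_def by (metis cinner_zero_left less_irrefl zero_complex.simps(1))
  then show ?thesis
    by (simp add: invertible_left_inverse matrix_left_invertible_ker)
qed

lemma pdm_inv:
  fixes M :: "complex^'n^'n"
  assumes "pdm M" shows "pdm (matrix_inv M)"
  unfolding pdm_def
proof (intro allI impI)
  fix x :: "complex^'n" assume x: "x \<noteq> 0"
  have i: "invertible M" using pdm_invertible[OF assms] .
  define u where "u = matrix_inv M *v x"
  have xu: "x = M *v u" unfolding u_def
    by (simp add: matrix_vector_mul_assoc inv_props(1)[OF i])
  have "u \<noteq> 0" using x xu by auto
  then have "0 < Re (cinner (M *v u) u)" using assms pdm_def by blast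
  also have "Re (cinner (M *v u) u) = Re (cinner (matrix_inv M *v x) x)"
    unfolding xu u_def[symmetric] by (simp add: Re_cinner_commute matrix_vector_mul_assoc inv_props(2)[OF i])
  finally show "0 < Re (cinner (matrix_inv M *v x) x)" .
qed



lemma XB_entry:
  "cnj (Xgrave S f $ l $ i) * Xgrave S f $ l $ j = cnj (Sgrave S $ l $ i) * Sgrave S $ l $ j"
proof -
  have c: "cnj (cis t) * cis t = 1" for t
    by (simp add: cis_cnj cis_mult)
  show ?thesis unfolding Xgrave_def Sgrave_def
    using c[of "2 * pi * f * real (pos (snd l))"]
    by (auto simp: algebra_simps)
qed

lemma XB: "cadj (Xgrave S f) ** Xgrave S f = cadj (Sgrave S) ** Sgrave S"
  by (simp add: vec_eq_iff matrix_matrix_mult_def cadj_def XB_entry)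

lemma herm_mv: "cadj M = M \<Longrightarrow> cinner (M *v u) v = cinner u (M *v v)"
  by (metis cinner_mv)

lemma pdm_add:
  assumes "pdm P" "\<And>x. 0 \<le> Re (cinner (B *v x) x)"
  shows "pdm (B + P)"
  using assms unfolding pdm_def
  by (auto simp: matrix_vector_mult_add_rdistrib cinner_add_left intro: add_nonneg_pos)

lemma BB_psd: "0 \<le> Re (cinner ((cadj T ** T) *v x) x)"
proof -
  have "cinner ((cadj T ** T) *v x) x = cinner (T *v x) (T *v x)"
    by (simp add: matrix_vector_mul_assoc[symmetric] cinner_mv)
  then show ?thesis by (simp add: cinner_self)
qed

lemma BB_herm: "cadj (cadj T ** T) = cadj T ** T"
  by (simp add: cadj_mult)



lemma quad_expand:
  assumes "cadj M = M"
  shows "Re (cinner (M *v (u - v)) (u - v)) = Re (cinner (M *v u) u) - 2 * Re (cinner u (M *v v)) + Re (cinner (M *v v) v)"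
proof -
  have "cinner (M *v (u - v)) (u - v) = cinner (M *v u) u - cinner (M *v u) v - cinner (M *v v) u + cinner (M *v v) v"
    by (simp add: matrix_vector_mult_diff_distrib cinner_diff_left cinner_diff_right)
  moreover have "cinner (M *v u) v = cinner u (M *v v)" using herm_mv[OF assms] .
  moreover have "Re (cinner (M *v v) u) = Re (cinner u (M *v v))" by (rule Re_cinner_commute)
  ultimately show ?thesis by simp
qed

lemma norm_expand:
  "(norm (u - v))\<^sup>2 = (norm u)\<^sup>2 - 2 * Re (cinner v u) + (norm v)\<^sup>2"
proof -
  have "cinner (u - v) (u - v) = cinner u u - cinner u v - cinner v u + cinner v v"
    by (simp add: cinner_diff_left cinner_diff_right)
  moreover have "Re (cinner u v) = Re (cinner v u)" by (rule Re_cinner_commute)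
  ultimately have "Re (cinner (u - v) (u - v)) = Re (cinner u u) - 2 * Re (cinner v u) + Re (cinner v v)"
    by simp
  then show ?thesis by (simp add: cinner_self)
qed

lemma key_identity:
  fixes S :: "complex^'t::finite^'k::{finite,wellorder}"
    and mu :: "complex^('r::finite \<times> 't)"
    and Sig :: "complex^('r \<times> 't)^('r \<times> 't)"
    and y :: "complex^('r \<times> 'k)"
  defines "P \<equiv> matrix_inv Sig"
  defines "M \<equiv> cadj (Sgrave S :: complex^('r \<times> 't)^('r \<times> 'k)) ** Sgrave S + P"
  assumes hP: "cadj P = P" and hM: "cadj M = M" and iM: "invertible M"
  shows "Re (cinner (P *v (h - mu)) (h - mu)) + (norm (y - Xgrave S f *v h))\<^sup>2
       = Re (cinner (M *v (h - h_mmse S mu Sig y f)) (h - h_mmse S mu Sig y f))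
         - gfun S mu Sig muf 0 y f
         + (Re (cinner (P *v mu) mu) + (norm y)\<^sup>2 - Re (cinner (Amat S Sig *v (P *v mu)) (P *v mu)))"
proof -
  let ?X = "Xgrave S f :: complex^('r \<times> 't)^('r \<times> 'k)"
  let ?B = "cadj (Sgrave S :: complex^('r \<times> 't)^('r \<times> 'k)) ** Sgrave S"
  define A where "A = Amat S Sig"
  define z where "z = cadj ?X *v y"
  define c where "c = P *v mu + z"
  define w where "w = h_mmse S mu Sig y f"
  have A: "A = matrix_inv M" unfolding A_def Amat_def M_def P_def by simp
  have AM: "A ** M = mat 1" "M ** A = mat 1" using inv_props[OF iM] A by auto
  have hA: "cadj A = A" using cadj_inv[OF iM] hM A by simp
  have AP: "A ** P = mat 1 - A ** ?B"
    using AM(1) unfolding M_def by (simp add: matrix_add_ldistrib algebra_simps)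
  have bv: "bvec S Sig mu = A *v (P *v mu)"
    unfolding bvec_def A_def[symmetric] using AP
    by (simp add: matrix_vector_mul_assoc)
  have XB': "cadj ?X ** ?X = ?B" by (rule XB)
  have w: "w = A *v c"
  proof -
    have "w = A *v z - A *v (?B *v mu) + mu"
      unfolding w_def h_mmse_def A_def[symmetric] z_def
      by (simp add: matrix_vector_mult_diff_distrib matrix_vector_mul_assoc XB')
    also have "A *v (?B *v mu) = (A ** ?B) *v mu" by (simp add: matrix_vector_mul_assoc)
    also have "A *v c = A *v z + (A ** P) *v mu"
      unfolding c_def by (simp add: matrix_vector_right_distrib matrix_vector_mul_assoc add.commute)
    ultimately show ?thesis unfolding AP
      by (simp add: matrix_vector_mult_diff_rdistrib)
  qed
  have Mw: "M *v w = c" unfolding w by (simp add: matrix_vector_mul_assoc AM)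
  have e1: "Re (cinner (P *v (h - mu)) (h - mu)) = Re (cinner (P *v h) h) - 2 * Re (cinner h (P *v mu)) + Re (cinner (P *v mu) mu)"
    by (rule quad_expand[OF hP])
  have e2: "(norm (y - ?X *v h))\<^sup>2 = (norm y)\<^sup>2 - 2 * Re (cinner h z) + Re (cinner (?B *v h) h)"
  proof -
    have "cinner (?X *v h) y = cinner h z" unfolding z_def by (rule cinner_mv)
    moreover have "(norm (?X *v h))\<^sup>2 = Re (cinner (?B *v h) h)"
    proof -
      have "cinner (?B *v h) h = cinner (?X *v h) (?X *v h)"
        by (simp add: XB'[symmetric] matrix_vector_mul_assoc[symmetric] cinner_mv)
      then show ?thesis by (simp add: cinner_self)
    qed
    ultimately show ?thesis using norm_expand[of y "?X *v h"] by simp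
  qed
  have e3: "Re (cinner (M *v (h - w)) (h - w)) = Re (cinner (M *v h) h) - 2 * Re (cinner h c) + Re (cinner (A *v c) c)"
  proof -
    have "Re (cinner (M *v w) w) = Re (cinner (A *v c) c)"
      unfolding Mw by (simp add: w Re_cinner_commute)
    then show ?thesis using quad_expand[OF hM, of h w] Mw by simp
  qed
  have e4: "Re (cinner (A *v c) c) = Re (cinner (A *v (P *v mu)) (P *v mu)) + 2 * Re (cinner z (A *v (P *v mu))) + Re (cinner (A *v z) z)"
  proof -
    have "cinner (A *v c) c = cinner (A *v (P *v mu)) (P *v mu) + cinner (A *v (P *v mu)) z + cinner (A *v z) (P *v mu) + cinner (A *v z) z"
      unfolding c_def by (simp add: matrix_vector_right_distrib cinner_add_left cinner_add_right)
    moreover have "cinner (A *v z) (P *v mu) = cinner z (A *v (P *v mu))" by (rule herm_mv[OF hA])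
    moreover have "Re (cinner (A *v (P *v mu)) z) = Re (cinner z (A *v (P *v mu)))" by (rule Re_cinner_commute)
    ultimately show ?thesis by simp
  qed
  have g: "gfun S mu Sig muf 0 y f = 2 * Re (cinner z (A *v (P *v mu))) + Re (cinner (A *v z) z)"
    unfolding gfun_def Let_def z_def[symmetric] A_def[symmetric] bv by simp
  have Mh: "Re (cinner (M *v h) h) = Re (cinner (?B *v h) h) + Re (cinner (P *v h) h)"
    unfolding M_def by (simp add: matrix_vector_mult_add_rdistrib cinner_add_left)
  have ch: "Re (cinner h c) = Re (cinner h (P *v mu)) + Re (cinner h z)"
    unfolding c_def by (simp add: cinner_add_right)
  show ?thesis
    unfolding w_def[symmetric] A_def[symmetric] using e1 e2 e3 e4 g Mh ch by simp
qed



lemma gauss1: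
  fixes l :: real assumes l: "l > 0"
  shows "integrable lborel (\<lambda>t::real. exp (- l * t\<^sup>2))"
proof -
  define s where "s = sqrt (1 / (2 * l))"
  have s: "s > 0" unfolding s_def using l by simp
  have s2: "2 * s\<^sup>2 = 1 / l" unfolding s_def using l by simp
  have "(\<lambda>t::real. exp (- l * t\<^sup>2)) = (\<lambda>t. sqrt (2 * pi * s\<^sup>2) * normal_density 0 s t)"
  proof
    fix t :: real
    have "- (t\<^sup>2) / (2 * s\<^sup>2) = - l * t\<^sup>2" by (simp only: s2) simp
    moreover have "sqrt (2 * pi * s\<^sup>2) > 0" using s by simp
    ultimately show "exp (- l * t\<^sup>2) = sqrt (2 * pi * s\<^sup>2) * normal_density 0 s t"
      unfolding normal_density_def using s by simp
  qed
  then show ?thesis using integrable_normal_density[OF s, of 0] by simp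
qed

lemma gaussE:
  fixes l :: real assumes l: "l > 0"
  shows "integrable lborel (\<lambda>x::'a::euclidean_space. exp (- l * (norm x)\<^sup>2))"
proof -
  let ?T = "\<lambda>f. \<Sum>b\<in>(Basis::'a set). f b *\<^sub>R b"
  have "integrable (\<Pi>\<^sub>M b\<in>(Basis::'a set). lborel) (\<lambda>f. \<Prod>b\<in>Basis. exp (- l * (f b)\<^sup>2))"
    by (rule product_sigma_finite.product_integrable_prod) (auto simp: gauss1[OF l, simplified] product_sigma_finite_def intro: lborel.sigma_finite_measure_axioms)
  moreover have "\<And>f. exp (- l * (norm (?T f))\<^sup>2) = (\<Prod>b\<in>Basis. exp (- l * (f b)\<^sup>2))"
  proof -
    fix f :: "'a \<Rightarrow> real"
    have "(norm (?T f))\<^sup>2 = (\<Sum>b\<in>Basis. (f b)\<^sup>2)"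
      by (simp only: power2_norm_eq_inner) (simp add: euclidean_inner[of "?T f" "?T f"] power2_eq_square)
    then show "exp (- l * (norm (?T f))\<^sup>2) = (\<Prod>b\<in>Basis. exp (- l * (f b)\<^sup>2))"
      by (simp add: sum_distrib_left exp_sum)
  qed
  ultimately have "integrable (\<Pi>\<^sub>M b\<in>(Basis::'a set). lborel) (\<lambda>f. exp (- l * (norm (?T f))\<^sup>2))"
    by simp
  then have "integrable (distr (\<Pi>\<^sub>M b\<in>(Basis::'a set). lborel) borel ?T) (\<lambda>x. exp (- l * (norm x)\<^sup>2))"
    by (subst integrable_distr_eq) auto
  then show ?thesis by (simp flip: lborel_eq)
qed



lemma q_cont: "continuous_on UNIV (\<lambda>x::complex^'n. Re (cinner (M *v x) x))"
  unfolding cinner_def matrix_vector_mult_def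
  by (intro continuous_intros)

lemma mv_scaleR: "M *v (r *\<^sub>R x) = r *\<^sub>R (M *v (x::complex^'n))"
  by (simp add: vec_eq_iff matrix_vector_mult_def scaleR_sum_right)

lemma cinner_scaleR: "cinner (r *\<^sub>R u) (r *\<^sub>R v) = (r\<^sup>2) *\<^sub>R cinner u v"
  by (simp add: cinner_def scaleR_sum_right power2_eq_square)

lemma q_hom: "Re (cinner (M *v (r *\<^sub>R x)) (r *\<^sub>R x)) = r\<^sup>2 * Re (cinner (M *v x) x)"
  by (simp add: mv_scaleR cinner_scaleR)

lemma pdm_lower:
  fixes M :: "complex^'n^'n"
  assumes "pdm M"
  shows "\<exists>l>0. \<forall>x. l * (norm x)\<^sup>2 \<le> Re (cinner (M *v x) x)"
proof -
  let ?q = "\<lambda>x::complex^'n. Re (cinner (M *v x) x)"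
  have ne: "sphere (0::complex^'n) 1 \<noteq> {}" by simp
  obtain x0 where x0: "x0 \<in> sphere 0 1" and min: "\<forall>y\<in>sphere 0 1. ?q x0 \<le> ?q y"
    using continuous_attains_inf[OF compact_sphere ne continuous_on_subset[OF q_cont subset_UNIV]] by blast
  have "x0 \<noteq> 0" using x0 by auto
  then have pos: "?q x0 > 0" using assms pdm_def by blast
  have "\<forall>x. ?q x0 * (norm x)\<^sup>2 \<le> ?q x"
  proof
    fix x :: "complex^'n"
    show "?q x0 * (norm x)\<^sup>2 \<le> ?q x"
    proof (cases "x = 0")
      case True then show ?thesis by simp
    next
      case False
      define u where "u = (1 / norm x) *\<^sub>R x"
      have u: "u \<in> sphere 0 1" using False by (simp add: u_def)
      have xu: "x = norm x *\<^sub>R u" using False by (simp add: u_def)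
      have "?q x = ?q (norm x *\<^sub>R u)" by (simp only: xu[symmetric])
      then have "?q x = (norm x)\<^sup>2 * ?q u" by (simp only: q_hom)
      moreover have "?q x0 \<le> ?q u" using min u by blast
      ultimately show ?thesis by (metis mult.commute mult_right_mono zero_le_power2)
    qed
  qed
  then show ?thesis using pos by blast
qed

lemma q_meas: "(\<lambda>x::complex^'n. Re (cinner (M *v x) x)) \<in> borel_measurable borel"
  by (rule borel_measurable_continuous_onI[OF q_cont])

lemma expq_integrable:
  fixes M :: "complex^'n^'n"
  assumes "pdm M"
  shows "integrable lborel (\<lambda>x. exp (- Re (cinner (M *v x) x)))"
proof -
  obtain l where l: "l > 0" "\<And>x. l * (norm x)\<^sup>2 \<le> Re (cinner (M *v x) x)"
    using pdm_lower[OF assms] by blast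
  show ?thesis
  proof (rule Bochner_Integration.integrable_bound[OF gaussE[OF l(1)]])
    show "(\<lambda>x. exp (- Re (cinner (M *v x) x))) \<in> borel_measurable lborel"
      using q_meas by measurable
    show "AE x in lborel. norm (exp (- Re (cinner (M *v x) x))) \<le> norm (exp (- l * (norm (x::complex^'n))\<^sup>2))"
      using l(2) by auto
  qed
qed

lemma expq_integral_pos:
  fixes M :: "complex^'n^'n"
  assumes "pdm M"
  shows "(\<integral>x. exp (- Re (cinner (M *v x) x)) \<partial>lborel) > 0"
proof -
  let ?g = "\<lambda>x::complex^'n. exp (- Re (cinner (M *v x) x))"
  have i: "integrable lborel ?g" by (rule expq_integrable[OF assms])
  have nn: "0 \<le> (\<integral>x. exp (- Re (cinner (M *v x) x)) \<partial>lborel)" by (rule integral_nonneg_AE) auto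
  have "integral\<^sup>L lborel ?g \<noteq> 0"
  proof
    assume "integral\<^sup>L lborel ?g = 0"
    then have "AE x in lborel. ?g x = 0"
      using integral_nonneg_eq_0_iff_AE[OF i] by auto
    then have "AE x in lborel. x \<notin> (UNIV :: (complex^'n) set)" by simp
    then have "UNIV \<in> null_sets (lborel :: (complex^'n) measure)"
      by (subst AE_iff_null_sets) auto
    then show False by (simp add: null_sets_def)
  qed
  then show ?thesis using nn by linarith
qed

lemma expq_translate:
  fixes M :: "complex^'n^'n"
  shows "(\<integral>x. exp (- Re (cinner (M *v (x - w)) (x - w))) \<partial>lborel) = (\<integral>x. exp (- Re (cinner (M *v x) x)) \<partial>lborel)"
proof -
  let ?g = "\<lambda>x::complex^'n. exp (- Re (cinner (M *v x) x))"
  have gm: "?g \<in> borel_measurable borel" using q_meas by measurable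
  have "(\<integral>x. ?g x \<partial>lborel) = (\<integral>x. ?g x \<partial>(distr lborel borel ((+) (- w))))"
    by (simp add: lborel_distr_plus)
  also have "\<dots> = (\<integral>x. ?g (- w + x) \<partial>lborel)"
    by (rule integral_distr) (auto simp: gm)
  finally show ?thesis by simp
qed



lemma gfun_split: "gfun S mu Sig muf isig2 y f = gfun S mu Sig muf 0 y f - 1/2 * isig2 * (f - muf)\<^sup>2"
  unfolding gfun_def Let_def by simp

lemma max_exp_iff:
  fixes a :: real assumes "a > 0"
  shows "{f. \<forall>f'. a * exp (g f') \<le> a * exp (g f)} = {f. \<forall>f'. g f' \<le> g f}"
  using assms by auto

theorem theorem2:
  fixes S :: "complex^'t::finite^'k::{finite,wellorder}"
    and mu :: "complex^('r::finite \<times> 't)"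
    and Sig :: "complex^('r \<times> 't)^('r \<times> 't)"
    and muf s2 :: real
    and y :: "complex^('r \<times> 'k)"
  assumes "pos_def_mat Sig"
    and "s2 > 0"
  shows "(\<forall>h f. (\<forall>h' f'. joint_density S mu Sig muf s2 h' f' y \<le> joint_density S mu Sig muf s2 h f y)
              \<longleftrightarrow> ((\<forall>f'. gfun S mu Sig muf (1 / s2) y f' \<le> gfun S mu Sig muf (1 / s2) y f)
                   \<and> h = h_mmse S mu Sig y f))
       \<and> {f. \<forall>f'. cond_y_given_f S mu Sig muf s2 y f' * rgauss_density muf s2 f'
                 \<le> cond_y_given_f S mu Sig muf s2 y f * rgauss_density muf s2 f}
         = {f. \<forall>f'. gfun S mu Sig muf (1 / s2) y f' \<le> gfun S mu Sig muf (1 / s2) y f}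
       \<and> {f. \<forall>f'. cond_y_given_f S mu Sig muf s2 y f' \<le> cond_y_given_f S mu Sig muf s2 y f}
         = {f. \<forall>f'. gfun S mu Sig muf 0 y f' \<le> gfun S mu Sig muf 0 y f}
       \<and> (\<forall>f. {h. \<forall>h'. cond_h_given_yf S mu Sig muf s2 h' y f \<le> cond_h_given_yf S mu Sig muf s2 h y f}
              = {h_mmse S mu Sig y f})"
proof -
  note s2 = assms(2)
  have hSig: "cadj Sig = Sig" and pSig: "pdm Sig"
    using assms(1) unfolding pos_def_mat_def pdm_def by auto
  have iSig: "invertible Sig" by (rule pdm_invertible[OF pSig])
  have dSig: "det Sig \<noteq> 0" using iSig invertible_det_nz by blast
  define P where "P = matrix_inv Sig"
  have hP: "cadj P = P" unfolding P_def using cadj_inv(1)[OF iSig] hSig by simp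
  have pP: "pdm P" unfolding P_def by (rule pdm_inv[OF pSig])
  define M where "M = cadj (Sgrave S :: complex^('r \<times> 't)^('r \<times> 'k)) ** Sgrave S + P"
  have pM: "pdm M" unfolding M_def by (rule pdm_add[OF pP BB_psd])
  have hM: "cadj M = M" unfolding M_def by (simp add: cadj_add BB_herm hP)
  have iM: "invertible M" by (rule pdm_invertible[OF pM])
  define w where "w f = h_mmse S mu Sig y f" for f
  define E where "E f h = Re (cinner (M *v (h - w f)) (h - w f))" for f h
  define G1 where "G1 f = gfun S mu Sig muf (1 / s2) y f" for f
  define G0 where "G0 f = gfun S mu Sig muf 0 y f" for f
  define R where "R = Re (cinner (P *v mu) mu) + (norm y)\<^sup>2 - Re (cinner (Amat S Sig *v (P *v mu)) (P *v mu))"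
  define C where "C = exp (- R) / (pi ^ CARD('r \<times> 't) * cmod (det Sig) * sqrt (2 * pi * s2) * pi ^ CARD('r \<times> 'k))"
  have Cpos: "C > 0" unfolding C_def using dSig s2 by simp
  have key: "Re (cinner (P *v (h - mu)) (h - mu)) + (norm (y - Xgrave S f *v h))\<^sup>2 = E f h - G0 f + R" for h f
    unfolding E_def G0_def R_def w_def M_def P_def
    by (rule key_identity) (use hP hM iM in \<open>simp_all add: P_def M_def\<close>)
  have G10: "G1 f = G0 f - (f - muf)\<^sup>2 / (2 * s2)" for f
    unfolding G1_def G0_def by (subst gfun_split) simp
  have JF: "joint_density S mu Sig muf s2 h f y = C * exp (- E f h) * exp (G1 f)" for h f
  proof -
    let ?a = "Re (cinner (P *v (h - mu)) (h - mu))"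
    let ?b = "(f - muf)\<^sup>2 / (2 * s2)"
    let ?c = "(norm (y - Xgrave S f *v h))\<^sup>2"
    have ex: "- ?a + - ?b + - ?c = - R + - E f h + G1 f" using key[of h f] G10[of f] by linarith
    have "exp (- ?a + - ?b + - ?c) = exp (- R + - E f h + G1 f)" using ex by simp
    then have e: "exp (- ?a) * exp (- ?b) * exp (- ?c) = exp (- R) * exp (- E f h) * exp (G1 f)"
      unfolding exp_add .
    have r: "exp (- (f - muf)\<^sup>2 / (2 * s2)) = exp (- ?b)" by simp
    show ?thesis
      unfolding joint_density_def cgauss_density_def rgauss_density_def noise_density_def C_def P_def[symmetric] r
      using e by (simp add: field_simps)
  qed
  have Enn: "E f h \<ge> 0" for f h
    unfolding E_def using pM unfolding pdm_def by (cases "h - w f = 0") (auto intro: less_imp_le)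
  have E0: "E f h = 0 \<longleftrightarrow> h = w f" for f h
    unfolding E_def using pM unfolding pdm_def by (cases "h - w f = 0") (auto simp: less_le)
  have Ew: "E f (w f) = 0" for f using E0 by simp
  define K where "K = (\<integral>x. exp (- Re (cinner (M *v x) x)) \<partial>lborel)"
  have Kpos: "K > 0" unfolding K_def by (rule expq_integral_pos[OF pM])
  have I: "(\<integral>h. joint_density S mu Sig muf s2 h f y \<partial>lborel) = C * exp (G1 f) * K" for f
  proof -
    have "(\<integral>h. joint_density S mu Sig muf s2 h f y \<partial>lborel) = (\<integral>h. (C * exp (G1 f)) * exp (- E f h) \<partial>lborel)"
      by (simp add: JF mult_ac)
    also have "\<dots> = (C * exp (G1 f)) * (\<integral>h. exp (- E f h) \<partial>lborel)"
      by (rule integral_mult_right_zero)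
    also have "(\<integral>h. exp (- E f h) \<partial>lborel) = K"
      unfolding E_def K_def by (rule expq_translate)
    finally show ?thesis .
  qed
  have rgpos: "rgauss_density muf s2 f > 0" for f
    unfolding rgauss_density_def using s2 by simp
  have rg: "rgauss_density muf s2 f = exp (G1 f) / (exp (G0 f) * sqrt (2 * pi * s2))" for f
  proof -
    have "exp (G1 f) = exp (G0 f) * exp (- ((f - muf)\<^sup>2 / (2 * s2)))"
      unfolding G10 by (simp add: exp_diff exp_minus field_simps)
    then show ?thesis unfolding rgauss_density_def by simp
  qed
  have CY: "cond_y_given_f S mu Sig muf s2 y f * rgauss_density muf s2 f = (C * K) * exp (G1 f)" for f
    unfolding cond_y_given_f_def I using rgpos[of f] by simp
  have CY0: "cond_y_given_f S mu Sig muf s2 y f = (C * K * sqrt (2 * pi * s2)) * exp (G0 f)" for f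
    unfolding cond_y_given_f_def I rg using s2 by (simp add: field_simps)
  have CH: "cond_h_given_yf S mu Sig muf s2 h y f = exp (- E f h) / K" for h f
    unfolding cond_h_given_yf_def CY JF using Cpos Kpos by (simp add: field_simps)
  have c1: "(\<forall>h' f'. joint_density S mu Sig muf s2 h' f' y \<le> joint_density S mu Sig muf s2 h f y)
              \<longleftrightarrow> ((\<forall>f'. G1 f' \<le> G1 f) \<and> h = w f)" for h f
  proof
    assume A: "\<forall>h' f'. joint_density S mu Sig muf s2 h' f' y \<le> joint_density S mu Sig muf s2 h f y"
    have e1: "exp (- E f h) \<le> 1" using Enn[of f h] by simp
    have "\<forall>f'. G1 f' \<le> G1 f"
    proof
      fix f'
      have "C * exp (G1 f') \<le> C * exp (- E f h) * exp (G1 f)"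
        using A[rule_format, of "w f'" f'] unfolding JF Ew by simp
      also have "\<dots> \<le> C * exp (G1 f)"
        using e1 Cpos by (simp add: mult_left_le)
      finally show "G1 f' \<le> G1 f" using Cpos by simp
    qed
    moreover have "h = w f"
    proof -
      have "C * exp (G1 f) \<le> C * exp (- E f h) * exp (G1 f)"
        using A[rule_format, of "w f" f] unfolding JF Ew by simp
      then have "1 \<le> exp (- E f h)" using Cpos by (simp add: mult.assoc)
      then have "E f h \<le> 0" by simp
      then have "E f h = 0" using Enn[of f h] by simp
      then show ?thesis using E0 by simp
    qed
    ultimately show "(\<forall>f'. G1 f' \<le> G1 f) \<and> h = w f" by simp
  next
    assume B: "(\<forall>f'. G1 f' \<le> G1 f) \<and> h = w f"
    show "\<forall>h' f'. joint_density S mu Sig muf s2 h' f' y \<le> joint_density S mu Sig muf s2 h f y"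
    proof (intro allI)
      fix h' f'
      have "C * exp (- E f' h') * exp (G1 f') \<le> C * 1 * exp (G1 f')"
        using Enn[of f' h'] Cpos by (intro mult_right_mono mult_left_mono) auto
      also have "\<dots> \<le> C * exp (G1 f)" using B Cpos by simp
      finally show "joint_density S mu Sig muf s2 h' f' y \<le> joint_density S mu Sig muf s2 h f y"
        unfolding JF using B Ew by simp
    qed
  qed
  have c2: "{f. \<forall>f'. cond_y_given_f S mu Sig muf s2 y f' * rgauss_density muf s2 f'
                 \<le> cond_y_given_f S mu Sig muf s2 y f * rgauss_density muf s2 f} = {f. \<forall>f'. G1 f' \<le> G1 f}"
    unfolding CY using max_exp_iff[of "C * K" G1] Cpos Kpos by simp
  have c3: "{f. \<forall>f'. cond_y_given_f S mu Sig muf s2 y f' \<le> cond_y_given_f S mu Sig muf s2 y f} = {f. \<forall>f'. G0 f' \<le> G0 f}"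
    unfolding CY0 using max_exp_iff[of "C * K * sqrt (2 * pi * s2)" G0] Cpos Kpos s2 by simp
  have c4: "{h. \<forall>h'. cond_h_given_yf S mu Sig muf s2 h' y f \<le> cond_h_given_yf S mu Sig muf s2 h y f} = {w f}" for f
  proof (rule set_eqI, rule iffI)
    fix h assume "h \<in> {h. \<forall>h'. cond_h_given_yf S mu Sig muf s2 h' y f \<le> cond_h_given_yf S mu Sig muf s2 h y f}"
    then have "exp (- E f (w f)) / K \<le> exp (- E f h) / K" unfolding CH by blast
    then have "1 \<le> exp (- E f h)" using Kpos unfolding Ew by (simp add: divide_right_mono_neg le_divide_eq)
    then have "E f h \<le> 0" by simp
    then have "E f h = 0" using Enn[of f h] by simp
    then show "h \<in> {w f}" using E0 by simp
  next
    fix h assume "h \<in> {w f}"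
    then have h: "h = w f" by simp
    show "h \<in> {h. \<forall>h'. cond_h_given_yf S mu Sig muf s2 h' y f \<le> cond_h_given_yf S mu Sig muf s2 h y f}"
    proof (simp add: CH h, intro allI)
      fix h'
      show "exp (- E f h') / K \<le> exp (- E f (w f)) / K"
        using Enn[of f h'] Kpos Ew[of f] by (simp add: divide_right_mono)
    qed
  qed
  show ?thesis
    using c1 c2 c3 c4 unfolding G1_def G0_def w_def by simp
qed


end
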